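(* If $\mathcal{I}$ is an ideal on $\mathbf{N}$, then $$c_0(\mathcal{I})\cap\ell_\infty=\Big\{x\in\ell_\infty:\int_{\mathbf{N}}|x|\,\mathrm{d}\mu=0\text{ for all }\mu\in\mathrm{M}(\mathcal{I})\Big\}.$$
   Context: An ideal on $\mathbf{N}$ is a family of subsets closed under subsets and finite unions, not containing $\mathbf{N}$, and containing all finite sets. $c_0(\mathcal{I})$ is the set of real sequences $x$ with $\{n:|x_n|\ge\varepsilon\}\in\mathcal{I}$ for every $\varepsilon>0$; $\ell_\infty$ is the space of bounded real sequences. $\mathrm{M}(\mathcal{I})$ is the set of finitely additive probability measures $\mu$ on $\mathcal{P}(\mathbf{N})$ with $\mu(A)=0$ for all $A\in\mathcal{I}$, and $\int_{\mathbf{N}}x\,\mathrm{d}\mu$ is the usual integral of a bounded sequence against a finitely additive measure. *)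

theory Defs
  imports "HOL-Analysis.Analysis"
begin

definition is_ideal :: "nat set set \<Rightarrow> bool" where
  "is_ideal I \<longleftrightarrow>
     (\<forall>A\<in>I. \<forall>B. B \<subseteq> A \<longrightarrow> B \<in> I) \<and>
     (\<forall>A\<in>I. \<forall>B\<in>I. A \<union> B \<in> I) \<and>
     UNIV \<notin> I \<and>
     (\<forall>A. finite A \<longrightarrow> A \<in> I)"

definition ell_inf :: "(nat \<Rightarrow> real) set" where
  "ell_inf = {x. \<exists>M. \<forall>n. \<bar>x n\<bar> \<le> M}"

definition c0 :: "nat set set \<Rightarrow> (nat \<Rightarrow> real) set" where
  "c0 I = {x. \<forall>\<epsilon>>0. {n. \<bar>x n\<bar> \<ge> \<epsilon>} \<in> I}"

definition fa_prob :: "(nat set \<Rightarrow> real) \<Rightarrow> bool" where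
  "fa_prob \<mu> \<longleftrightarrow>
     (\<forall>A. \<mu> A \<ge> 0) \<and> \<mu> UNIV = 1 \<and>
     (\<forall>A B. A \<inter> B = {} \<longrightarrow> \<mu> (A \<union> B) = \<mu> A + \<mu> B)"

definition M_ideal :: "nat set set \<Rightarrow> (nat set \<Rightarrow> real) set" where
  "M_ideal I = {\<mu>. fa_prob \<mu> \<and> (\<forall>A\<in>I. \<mu> A = 0)}"

definition fin_partition :: "nat set set \<Rightarrow> bool" where
  "fin_partition P \<longleftrightarrow> finite P \<and> \<Union>P = UNIV \<and> {} \<notin> P \<and>
     (\<forall>A\<in>P. \<forall>B\<in>P. A \<noteq> B \<longrightarrow> A \<inter> B = {})"

text \<open>Integral of a bounded sequence against a finitely additive measure,
  defined as the supremum of lower Darboux sums over finite partitions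
  (for bounded functions this coincides with the usual integral).\<close>
definition fa_integral :: "(nat \<Rightarrow> real) \<Rightarrow> (nat set \<Rightarrow> real) \<Rightarrow> real" where
  "fa_integral x \<mu> =
     Sup {(\<Sum>A\<in>P. \<mu> A * (INF n\<in>A. x n)) | P. fin_partition P}"

end

theory Submission
  imports Defs
begin

lemma fa_empty: "fa_prob \<mu> \<Longrightarrow> \<mu> {} = 0"
proof -
  assume f: "fa_prob \<mu>"
  have "\<mu> ({} \<union> {}) = \<mu> {} + \<mu> {}" using f unfolding fa_prob_def by blast
  then show ?thesis by simp
qed

lemma fa_mono: "fa_prob \<mu> \<Longrightarrow> A \<subseteq> B \<Longrightarrow> \<mu> A \<le> \<mu> B"
proof -
  assume f: "fa_prob \<mu>" and s: "A \<subseteq> B"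
  have "A \<union> (B - A) = B" using s by blast
  then have "\<mu> B = \<mu> (A \<union> (B - A))" by simp
  also have "\<dots> = \<mu> A + \<mu> (B - A)"
  proof -
    have add: "\<forall>A B. A \<inter> B = {} \<longrightarrow> \<mu> (A \<union> B) = \<mu> A + \<mu> B" using f unfolding fa_prob_def by blast
    have "A \<inter> (B - A) = {}" by blast
    then show ?thesis by (rule add[rule_format])
  qed
  finally show ?thesis using f unfolding fa_prob_def by (simp add: add_increasing2)
qed

lemma fa_sum: assumes f: "fa_prob \<mu>" shows "finite P \<Longrightarrow> (\<forall>A\<in>P. \<forall>B\<in>P. A \<noteq> B \<longrightarrow> A \<inter> B = {})
   \<Longrightarrow> sum \<mu> P = \<mu> (\<Union>P)"
proof (induction P rule: finite_induct)
  case empty then show ?case using fa_empty[OF f] by simp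
next
  case (insert A P)
  have d: "A \<inter> \<Union>P = {}"
  proof (rule ccontr)
    assume "A \<inter> \<Union>P \<noteq> {}"
    then obtain B where B: "B \<in> P" "A \<inter> B \<noteq> {}" by auto
    have "A \<noteq> B" using B insert.hyps(2) by auto
    then show False using insert.prems B by auto
  qed
  have "\<forall>A\<in>P. \<forall>B\<in>P. A \<noteq> B \<longrightarrow> A \<inter> B = {}" using insert.prems by simp
  then have "sum \<mu> (insert A P) = \<mu> A + \<mu> (\<Union>P)" using insert.hyps insert.IH by simp
  also have "\<dots> = \<mu> (A \<union> \<Union>P)" using f d unfolding fa_prob_def by simp
  finally show ?case by simp
qed

lemma inf_props:
  fixes x :: "nat \<Rightarrow> real"
  assumes "A \<noteq> {}"
  shows "0 \<le> (INF n\<in>A. \<bar>x n\<bar>)" and "n \<in> A \<Longrightarrow> (INF n\<in>A. \<bar>x n\<bar>) \<le> \<bar>x n\<bar>"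
proof -
  show "0 \<le> (INF n\<in>A. \<bar>x n\<bar>)" using assms by (intro cINF_greatest) auto
  have "bdd_below ((\<lambda>n. \<bar>x n\<bar>) ` A)" by (rule bdd_belowI[of _ 0]) auto
  then show "n \<in> A \<Longrightarrow> (INF n\<in>A. \<bar>x n\<bar>) \<le> \<bar>x n\<bar>" by (intro cINF_lower) auto
qed

lemma lsum_nonneg:
  assumes "fa_prob \<mu>" "fin_partition P"
  shows "0 \<le> (\<Sum>A\<in>P. \<mu> A * (INF n\<in>A. \<bar>x n\<bar>))"
  using assms inf_props(1) unfolding fa_prob_def fin_partition_def
  by (intro sum_nonneg) (metis mult_nonneg_nonneg)

lemma lsum_le:
  assumes "fa_prob \<mu>" "fin_partition P" "\<And>A. A \<in> P \<Longrightarrow> \<mu> A * (INF n\<in>A. \<bar>x n\<bar>) \<le> \<mu> A * c"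
  shows "(\<Sum>A\<in>P. \<mu> A * (INF n\<in>A. \<bar>x n\<bar>)) \<le> c"
proof -
  have "(\<Sum>A\<in>P. \<mu> A * (INF n\<in>A. \<bar>x n\<bar>)) \<le> (\<Sum>A\<in>P. \<mu> A * c)"
    using assms(3) by (rule sum_mono)
  also have "\<dots> = sum \<mu> P * c" by (simp add: sum_distrib_right)
  also have "sum \<mu> P = 1" using fa_sum[OF assms(1)] assms(1,2)
    unfolding fin_partition_def fa_prob_def by simp
  finally show ?thesis by simp
qed

lemma bdd:
  assumes "fa_prob \<mu>" "\<And>n. \<bar>x n\<bar> \<le> M"
  shows "bdd_above {(\<Sum>A\<in>P. \<mu> A * (INF n\<in>A. \<bar>x n\<bar>)) | P. fin_partition P}"
proof (rule bdd_aboveI)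
  fix s assume "s \<in> {(\<Sum>A\<in>P. \<mu> A * (INF n\<in>A. \<bar>x n\<bar>)) | P. fin_partition P}"
  then obtain P where p: "fin_partition P" and s: "s = (\<Sum>A\<in>P. \<mu> A * (INF n\<in>A. \<bar>x n\<bar>))"
    by blast
  show "s \<le> M" unfolding s
  proof (rule lsum_le[OF assms(1) p])
    fix A assume "A \<in> P"
    then have "A \<noteq> {}" using p unfolding fin_partition_def by auto
    then obtain n where "n \<in> A" "A \<noteq> {}" by blast
    then have "(INF n\<in>A. \<bar>x n\<bar>) \<le> M" using inf_props(2)[where A=A and x=x and n=n] assms(2)[of n] by linarith
    moreover have "0 \<le> \<mu> A" using assms(1) unfolding fa_prob_def by simp
    ultimately show "\<mu> A * (INF n\<in>A. \<bar>x n\<bar>) \<le> \<mu> A * M" by (rule mult_left_mono)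
  qed
qed

lemma univ_part: "fin_partition {UNIV}"
  unfolding fin_partition_def by auto

lemma int_ge0:
  assumes "fa_prob \<mu>" "\<And>n. \<bar>x n\<bar> \<le> M"
  shows "0 \<le> fa_integral (\<lambda>n. \<bar>x n\<bar>) \<mu>"
proof -
  have "0 \<le> (\<Sum>A\<in>{UNIV}. \<mu> A * (INF n\<in>A. \<bar>x n\<bar>))"
    by (rule lsum_nonneg[OF assms(1) univ_part])
  also have "\<dots> \<le> fa_integral (\<lambda>n. \<bar>x n\<bar>) \<mu>"
    unfolding fa_integral_def using univ_part
    by (intro cSup_upper[OF _ bdd[OF assms]]) (use univ_part in blast)
  finally show ?thesis .
qed

lemma ultra:
  assumes I: "is_ideal I" and E: "E \<notin> I"
  shows "\<exists>\<mu>\<in>M_ideal I. \<mu> E = 1"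
proof -
  define Z where "Z = {J. I \<subseteq> J \<and> (\<forall>A\<in>J. \<forall>B. B \<subseteq> A \<longrightarrow> B \<in> J) \<and>
      (\<forall>A\<in>J. \<forall>B\<in>J. A \<union> B \<in> J) \<and> E \<notin> J}"
  have IZ: "I \<in> Z" using I E unfolding Z_def is_ideal_def by auto
  have "\<exists>M\<in>Z. \<forall>X\<in>Z. M \<subseteq> X \<longrightarrow> X = M"
  proof (rule Zorn_Lemma2, intro ballI)
    fix C assume C: "C \<in> chains Z"
    show "\<exists>U\<in>Z. \<forall>X\<in>C. X \<subseteq> U"
    proof (cases "C = {}")
      case True then show ?thesis using IZ by blast
    next
      case False
      have CZ: "C \<subseteq> Z" and ch: "\<forall>X\<in>C. \<forall>Y\<in>C. X \<subseteq> Y \<or> Y \<subseteq> X"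
        using C unfolding chains_def chain_subset_def by auto
      have XZ: "X \<in> Z" if "X \<in> C" for X using CZ that by blast
      have Xd: "B \<in> X" if "X \<in> C" "A \<in> X" "B \<subseteq> A" for X A B
        using XZ[OF that(1)] that(2,3) unfolding Z_def by simp
      have Xu: "A \<union> B \<in> X" if "X \<in> C" "A \<in> X" "B \<in> X" for X A B
        using XZ[OF that(1)] that(2,3) unfolding Z_def by simp
      have XE: "E \<notin> X" if "X \<in> C" for X
        using XZ[OF that(1)] unfolding Z_def by simp
      have "\<Union>C \<in> Z" unfolding Z_def
      proof (intro CollectI conjI ballI allI impI)
        show "I \<subseteq> \<Union>C"
        proof -
          obtain X where "X \<in> C" using False by blast
          then have "I \<subseteq> X" using XZ[of X] unfolding Z_def by simp
          then show ?thesis using \<open>X \<in> C\<close> by blast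
        qed
        show "B \<in> \<Union>C" if a1: "A \<in> \<Union>C" and a2: "B \<subseteq> A" for A B
        proof -
          obtain X where "X \<in> C" "A \<in> X" using a1 by blast
          then show ?thesis using Xd[of X A B] a2 by blast
        qed
        show "A \<union> B \<in> \<Union>C" if a3: "A \<in> \<Union>C" "B \<in> \<Union>C" for A B
        proof -
          obtain X Y where "X \<in> C" "Y \<in> C" "A \<in> X" "B \<in> Y" using a3 by blast
          then show ?thesis
          proof -
            assume a: "X \<in> C" "Y \<in> C" "A \<in> X" "B \<in> Y"
            show ?thesis
            proof (cases "X \<subseteq> Y")
              case True
              then show ?thesis using Xu[of Y A B] a by blast
            next
              case False
              then have "Y \<subseteq> X" using ch a by blast
              then show ?thesis using Xu[of X A B] a by blast
            qed
          qed
        qed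
        show "E \<notin> \<Union>C" using XE by blast
      qed
      then show ?thesis by blast
    qed
  qed
  then obtain J where J: "J \<in> Z" and max: "\<And>X. X \<in> Z \<Longrightarrow> J \<subseteq> X \<Longrightarrow> X = J" by blast
  have dc: "\<And>A B. A \<in> J \<Longrightarrow> B \<subseteq> A \<Longrightarrow> B \<in> J" and uc: "\<And>A B. A \<in> J \<Longrightarrow> B \<in> J \<Longrightarrow> A \<union> B \<in> J"
    and EJ: "E \<notin> J" and IJ: "I \<subseteq> J" using J unfolding Z_def by auto
  have gen: "\<exists>C\<in>J. E \<subseteq> A \<union> C" if "A \<notin> J" for A
  proof (rule ccontr)
    assume nc: "\<not> ?thesis"
    define K where "K = {B. \<exists>C\<in>J. B \<subseteq> A \<union> C}"
    have "K \<in> Z" unfolding Z_def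
    proof (intro CollectI conjI ballI allI impI)
      show "I \<subseteq> K" using IJ unfolding K_def by blast
      show "B \<in> K" if "A' \<in> K" "B \<subseteq> A'" for A' B using that unfolding K_def by blast
      show "A' \<union> B \<in> K" if a4: "A' \<in> K" "B \<in> K" for A' B
      proof -
        obtain C1 C2 where "C1 \<in> J" "C2 \<in> J" "A' \<subseteq> A \<union> C1" "B \<subseteq> A \<union> C2"
          using a4 unfolding K_def by blast
        then show ?thesis unfolding K_def using uc[of C1 C2] by blast
      qed
      show "E \<notin> K" using nc unfolding K_def by blast
    qed
    moreover have "J \<subseteq> K" unfolding K_def by blast
    ultimately have "K = J" using max by blast
    moreover have "{} \<in> J" using IJ assms(1) unfolding is_ideal_def by blast
    moreover have "A \<in> K" using \<open>{} \<in> J\<close> unfolding K_def by blast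
    ultimately show False using that by simp
  qed
  have prime: "A \<in> J \<or> -A \<in> J" for A
  proof (rule ccontr)
    assume "\<not> ?thesis"
    then have n1: "A \<notin> J" and n2: "-A \<notin> J" by auto
    obtain C1 where "C1 \<in> J" "E \<subseteq> A \<union> C1" using gen[OF n1] by blast
    obtain C2 where "C2 \<in> J" "E \<subseteq> -A \<union> C2" using gen[OF n2] by blast
    have "E \<subseteq> C1 \<union> C2" using \<open>E \<subseteq> A \<union> C1\<close> \<open>E \<subseteq> -A \<union> C2\<close> by blast
    moreover have "C1 \<union> C2 \<in> J" using uc[OF \<open>C1 \<in> J\<close> \<open>C2 \<in> J\<close>] .
    ultimately have "E \<in> J" using dc[of "C1 \<union> C2" E] by simp
    then show False using EJ by simp
  qed
  define \<mu> where "\<mu> = (\<lambda>A. if A \<in> J then 0 else 1::real)"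
  have UJ: "UNIV \<notin> J" using EJ dc[of UNIV E] by auto
  have "fa_prob \<mu>" unfolding fa_prob_def
  proof (intro conjI allI impI)
    show "0 \<le> \<mu> A" for A unfolding \<mu>_def by simp
    show "\<mu> UNIV = 1" unfolding \<mu>_def using UJ by simp
    show "\<mu> (A \<union> B) = \<mu> A + \<mu> B" if "A \<inter> B = {}" for A B
    proof -
      have "\<not> (A \<notin> J \<and> B \<notin> J)"
      proof
        assume "A \<notin> J \<and> B \<notin> J"
        then have "-A \<in> J" using prime[of A] by simp
        moreover have "B \<subseteq> -A" using that by blast
        ultimately have "B \<in> J" using dc[of "-A" B] by simp
        then show False using \<open>A \<notin> J \<and> B \<notin> J\<close> by simp
      qed
      moreover have "A \<union> B \<in> J \<longleftrightarrow> A \<in> J \<and> B \<in> J"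
        using uc[of A B] dc[of "A \<union> B" A] dc[of "A \<union> B" B] by auto
      ultimately show ?thesis unfolding \<mu>_def by auto
    qed
  qed
  moreover have "\<forall>A\<in>I. \<mu> A = 0" using IJ unfolding \<mu>_def by auto
  moreover have "\<mu> E = 1" using EJ unfolding \<mu>_def by simp
  ultimately show ?thesis unfolding M_ideal_def by blast
qed

theorem proposition3p3:
  fixes I :: "nat set set"
  assumes "is_ideal I"
  shows "c0 I \<inter> ell_inf =
    {x \<in> ell_inf. \<forall>\<mu>\<in>M_ideal I. fa_integral (\<lambda>n. \<bar>x n\<bar>) \<mu> = 0}"
proof (intro equalityI subsetI)
  fix x assume "x \<in> c0 I \<inter> ell_inf"
  then have c: "\<And>e. e > 0 \<Longrightarrow> {n. \<bar>x n\<bar> \<ge> e} \<in> I" and "x \<in> ell_inf"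
    unfolding c0_def by auto
  then obtain M where M: "\<And>n. \<bar>x n\<bar> \<le> M" unfolding ell_inf_def by blast
  have "fa_integral (\<lambda>n. \<bar>x n\<bar>) \<mu> = 0" if mu: "\<mu> \<in> M_ideal I" for \<mu>
  proof -
    have f: "fa_prob \<mu>" and z: "\<And>A. A \<in> I \<Longrightarrow> \<mu> A = 0" using mu unfolding M_ideal_def by auto
    have le: "fa_integral (\<lambda>n. \<bar>x n\<bar>) \<mu> \<le> e" if e: "e > 0" for e
      unfolding fa_integral_def
    proof (rule cSup_least)
      show "{(\<Sum>A\<in>P. \<mu> A * (INF n\<in>A. \<bar>x n\<bar>)) | P. fin_partition P} \<noteq> {}"
        using univ_part by blast
      fix s assume "s \<in> {(\<Sum>A\<in>P. \<mu> A * (INF n\<in>A. \<bar>x n\<bar>)) | P. fin_partition P}"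
      then obtain P where p: "fin_partition P" and s: "s = (\<Sum>A\<in>P. \<mu> A * (INF n\<in>A. \<bar>x n\<bar>))"
        by blast
      show "s \<le> e" unfolding s
      proof (rule lsum_le[OF f p])
        fix A assume A: "A \<in> P"
        then have ne: "A \<noteq> {}" using p unfolding fin_partition_def by blast
        have m0: "0 \<le> \<mu> A" using f unfolding fa_prob_def by simp
        show "\<mu> A * (INF n\<in>A. \<bar>x n\<bar>) \<le> \<mu> A * e"
        proof (cases "A \<subseteq> {n. \<bar>x n\<bar> \<ge> e}")
          case True
          then have "\<mu> A \<le> 0" using fa_mono[OF f True] z[OF c[OF e]] by simp
          then have "\<mu> A = 0" using m0 by simp
          then show ?thesis by simp
        next
          case False
          then obtain n where "n \<in> A" "\<bar>x n\<bar> < e" by (force simp: not_le)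
          then have "(INF n\<in>A. \<bar>x n\<bar>) \<le> e" using inf_props(2)[OF ne, where x=x and n=n] by simp
          then show ?thesis using m0 by (rule mult_left_mono)
        qed
      qed
    qed
    have ge: "0 \<le> fa_integral (\<lambda>n. \<bar>x n\<bar>) \<mu>" by (rule int_ge0[OF f M])
    show ?thesis
    proof (rule ccontr)
      assume "fa_integral (\<lambda>n. \<bar>x n\<bar>) \<mu> \<noteq> 0"
      then have "fa_integral (\<lambda>n. \<bar>x n\<bar>) \<mu> > 0" using ge by simp
      then show False using le[of "fa_integral (\<lambda>n. \<bar>x n\<bar>) \<mu> / 2"] by simp
    qed
  qed
  then show "x \<in> {x \<in> ell_inf. \<forall>\<mu>\<in>M_ideal I. fa_integral (\<lambda>n. \<bar>x n\<bar>) \<mu> = 0}"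
    using \<open>x \<in> ell_inf\<close> by blast
next
  fix x assume "x \<in> {x \<in> ell_inf. \<forall>\<mu>\<in>M_ideal I. fa_integral (\<lambda>n. \<bar>x n\<bar>) \<mu> = 0}"
  then have xl: "x \<in> ell_inf" and zi: "\<And>\<mu>. \<mu> \<in> M_ideal I \<Longrightarrow> fa_integral (\<lambda>n. \<bar>x n\<bar>) \<mu> = 0"
    by auto
  then obtain M where M: "\<And>n. \<bar>x n\<bar> \<le> M" unfolding ell_inf_def by blast
  have "{n. \<bar>x n\<bar> \<ge> e} \<in> I" if e: "e > 0" for e
  proof (rule ccontr)
    define E where "E = {n. \<bar>x n\<bar> \<ge> e}"
    assume "{n. \<bar>x n\<bar> \<ge> e} \<notin> I"
    then have EI: "E \<notin> I" unfolding E_def .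
    then obtain \<mu> where mu: "\<mu> \<in> M_ideal I" and mE: "\<mu> E = 1" using ultra[OF assms] by blast
    have f: "fa_prob \<mu>" using mu unfolding M_ideal_def by auto
    have Ene: "E \<noteq> {}" using EI assms unfolding is_ideal_def by auto
    define P where "P = {E, -E} - {{}}"
    have p: "fin_partition P" unfolding fin_partition_def P_def by auto
    have EP: "E \<in> P" using Ene unfolding P_def by auto
    have "e \<le> \<mu> E * (INF n\<in>E. \<bar>x n\<bar>)" unfolding mE
      using Ene by (auto intro!: cINF_greatest simp: E_def)
    also have "\<dots> \<le> (\<Sum>A\<in>P. \<mu> A * (INF n\<in>A. \<bar>x n\<bar>))"
    proof (rule member_le_sum[OF EP])
      show "finite P" using p unfolding fin_partition_def by simp
      fix A assume "A \<in> P - {E}"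
      then have "A \<noteq> {}" unfolding P_def by auto
      then show "0 \<le> \<mu> A * (INF n\<in>A. \<bar>x n\<bar>)"
        using inf_props(1) f unfolding fa_prob_def by simp
    qed
    also have "\<dots> \<le> fa_integral (\<lambda>n. \<bar>x n\<bar>) \<mu>"
      unfolding fa_integral_def using p
      by (intro cSup_upper[OF _ bdd[OF f M]]) blast
    also have "\<dots> = 0" using zi[OF mu] .
    finally show False using e by simp
  qed
  then show "x \<in> c0 I \<inter> ell_inf" using xl unfolding c0_def by blast
qed

end
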